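(* Let $\varphi,\psi:\mathbb{C}\rightarrow\mathbb{C}^n$ be given by $\varphi(\theta)=Y\exp_{N}(\theta S)c+((1,\theta,\cdots,\theta^{N})\otimes I_n)x$ and $\psi(\theta)=Y\exp_{N}(\theta S)d+((1,\theta,\cdots,\theta^{N})\otimes I_n)z$. Then, for any $N_{\max}\ge N+1$, \[ \langle\varphi,\psi\rangle=\sum_{i=0}^Nz_i^Hx_i+d^HW_{N+1,N_{\max}}c+\varepsilon_{N_{\max}}, \qquad W_{N,M}=\sum_{i=N}^{M}\frac{(S^i)^HY^HY S^i}{(i!)^2}, \] where the error satisfies \[ |\varepsilon_{N_{\max}}|\le\|d\|_2\|Y^HY\|_2\|c\|_2\frac{e^{2\|S\|_2}\|S\|_2^{2(N_{\max}+1)}}{((N_{\max}+1)!)^2}. \]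
   Context: Let $Y\in\mathbb{C}^{n\times p}$, $S\in\mathbb{C}^{p\times p}$, $c,d\in\mathbb{C}^p$, and $x=(x_0^T,\ldots,x_N^T)^T$, $z=(z_0^T,\ldots,z_N^T)^T\in\mathbb{C}^{(N+1)n}$ with blocks $x_i,z_i\in\mathbb{C}^n$. Here $\exp_N(\theta S):=\sum_{i=N+1}^\infty \frac{1}{i!}\theta^iS^i$ denotes the remainder of the truncated Taylor expansion of the matrix exponential (with $\exp_{-1}=\exp$). The scalar product of two such functions is defined as the Euclidean scalar product of their monomial Taylor coefficients, i.e. for $\varphi(\theta)=\sum_j\theta^jx_j$, $\psi(\theta)=\sum_j\theta^jz_j$, $\langle\varphi,\psi\rangle:=\sum_{i=0}^\infty z_i^Hx_i$; for the structured functions above this reads \[ \langle\varphi,\psi\rangle=\sum_{i=0}^Nz_i^Hx_i+\sum_{i=N+1}^{\infty}\frac{d^H(S^i)^HY^HY S^ic}{(i!)^2}. \] *)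

theory Defs
  imports "HOL-Analysis.Analysis"
begin

definition adjm :: "complex^'m^'n \<Rightarrow> complex^'n^'m" where
  "adjm A = (\<chi> i j. cnj (A $ j $ i))"

definition cdot :: "complex^'n \<Rightarrow> complex^'n \<Rightarrow> complex" where
  "cdot y x = (\<Sum>i\<in>UNIV. cnj (y $ i) * x $ i)"

primrec matpow :: "complex^'p^'p \<Rightarrow> nat \<Rightarrow> complex^'p^'p" where
  "matpow S 0 = mat 1"
| "matpow S (Suc k) = S ** matpow S k"

definition mnorm2 :: "complex^'m^'n \<Rightarrow> real" where
  "mnorm2 A = onorm (\<lambda>v. A *v v)"

text \<open>Monomial Taylor coefficients of
  theta \<mapsto> Y exp_N(theta S) c + ((1,theta,...,theta^N) \<otimes> I_n) x:
  the i-th coefficient is x_i for i \<le> N and Y S^i c / i! for i > N.\<close>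
definition struct_coeff ::
  "complex^'p^'n \<Rightarrow> complex^'p^'p \<Rightarrow> complex^'p \<Rightarrow> (nat \<Rightarrow> complex^'n) \<Rightarrow> nat \<Rightarrow> nat \<Rightarrow> complex^'n" where
  "struct_coeff Y S c x N i =
     (if i \<le> N then x i else (1 / fact i) *\<^sub>R (Y *v (matpow S i *v c)))"

text \<open>Scalar product of two functions given by their monomial Taylor coefficient
  sequences: <phi,psi> = sum_i z_i^H x_i.\<close>
definition taylor_inner :: "(nat \<Rightarrow> complex^'n) \<Rightarrow> (nat \<Rightarrow> complex^'n) \<Rightarrow> complex" where
  "taylor_inner phic psic = (\<Sum>i. cdot (psic i) (phic i))"

definition Wmat :: "complex^'p^'n \<Rightarrow> complex^'p^'p \<Rightarrow> nat \<Rightarrow> nat \<Rightarrow> complex^'p^'p" where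
  "Wmat Y S N M = (\<Sum>i=N..M. (1 / (fact i)^2) *\<^sub>R
      (adjm (matpow S i) ** adjm Y ** Y ** matpow S i))"

end

theory Submission imports Defs begin
lemma cdot_abs: "cmod (cdot u v) \<le> norm u * norm v"
proof -
  define u' :: "real^'a" where "u' = (\<chi> i. cmod (u$i))"
  define v' :: "real^'a" where "v' = (\<chi> i. cmod (v$i))"
  have "cmod (cdot u v) \<le> (\<Sum>i\<in>UNIV. cmod (u$i) * cmod (v$i))"
    unfolding cdot_def by (rule order_trans[OF norm_sum]) (simp add: norm_mult)
  also have "\<dots> = inner u' v'" by (simp add: u'_def v'_def inner_vec_def)
  also have "\<dots> \<le> norm u' * norm v'" by (rule norm_cauchy_schwarz)
  also have "norm u' = norm u" by (simp add: u'_def norm_vec_def)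
  also have "norm v' = norm v" by (simp add: v'_def norm_vec_def)
  finally show ?thesis .
qed

lemma cdot_adj: "cdot u (adjm B *v v) = cdot (B *v u) v"
proof -
  have "cdot u (adjm B *v v) = (\<Sum>i\<in>UNIV. \<Sum>j\<in>UNIV. cnj (u$i) * (cnj (B$j$i) * v$j))"
    unfolding cdot_def adjm_def matrix_vector_mult_def by (simp add: sum_distrib_left)
  also have "\<dots> = (\<Sum>j\<in>UNIV. \<Sum>i\<in>UNIV. cnj (u$i) * (cnj (B$j$i) * v$j))"
    by (rule sum.swap)
  also have "\<dots> = cdot (B *v u) v"
    unfolding cdot_def matrix_vector_mult_def by (simp add: sum_distrib_left sum_distrib_right mult_ac)
  finally show ?thesis .
qed
lemma mv_bound: "norm (A *v v) \<le> mnorm2 A * norm (v::complex^'a)"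
  unfolding mnorm2_def by (rule onorm) simp

lemma mnorm2_nonneg: "0 \<le> mnorm2 (A::complex^'a^'b)"
  unfolding mnorm2_def by (rule onorm_pos_le) simp

lemma matpow_bound: "norm (matpow S i *v v) \<le> mnorm2 S ^ i * norm (v::complex^'a)"
proof (induction i)
  case 0 then show ?case by simp
next
  case (Suc i)
  have "norm (matpow S (Suc i) *v v) = norm (S *v (matpow S i *v v))"
    by (simp add: matrix_vector_mul_assoc)
  also have "\<dots> \<le> mnorm2 S * norm (matpow S i *v v)" by (rule mv_bound)
  also have "\<dots> \<le> mnorm2 S * (mnorm2 S ^ i * norm v)"
    by (rule mult_left_mono[OF Suc mnorm2_nonneg])
  finally show ?case by simp
qed

lemma sc_comp: "((r::real) *\<^sub>R (v::complex^'a)) $ i = of_real r * v $ i"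
  using scaleR_conv_of_real[of r "v$i"] by simp

lemma sc_comp2: "((r::real) *\<^sub>R (M::complex^'a^'b)) $ i $ j = of_real r * M $ i $ j"
  using scaleR_conv_of_real[of r "M$i$j"] by simp

lemma cdot_scale: "cdot ((r::real) *\<^sub>R u) ((q::real) *\<^sub>R v) = of_real (r*q) * cdot u v"
  unfolding cdot_def sc_comp by (simp add: sum_distrib_left mult_ac)

lemma cdot_sum2: "finite A \<Longrightarrow> cdot u (\<Sum>k\<in>A. f k) = (\<Sum>k\<in>A. cdot u (f k))"
proof -
  assume "finite A"
  have "cdot u (\<Sum>k\<in>A. f k) = (\<Sum>i\<in>UNIV. \<Sum>k\<in>A. cnj (u$i) * f k $ i)"
    unfolding cdot_def by (simp add: sum_component sum_distrib_left)
  also have "\<dots> = (\<Sum>k\<in>A. cdot u (f k))"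
    unfolding cdot_def by (rule sum.swap)
  finally show ?thesis .
qed

lemma mv_sum: "finite A \<Longrightarrow> (\<Sum>k\<in>A. M k) *v (c::complex^'a) = (\<Sum>k\<in>A. M k *v c)"
  by (induction A rule: finite_induct) (simp_all add: matrix_vector_mult_add_rdistrib)

lemma mv_scale: "((r::real) *\<^sub>R M) *v (c::complex^'a) = r *\<^sub>R (M *v c)"
proof -
  have "\<And>i. (\<Sum>j\<in>UNIV. (r *\<^sub>R M) $ i $ j * c $ j) = of_real r * (\<Sum>j\<in>UNIV. M $ i $ j * c $ j)"
    by (simp only: sc_comp2 sum_distrib_left mult.assoc)
  then show ?thesis unfolding vec_eq_iff matrix_vector_mult_def
    by (simp only: vec_lambda_beta sc_comp) simp
qed

lemma cdot_scaleR2: "cdot u ((r::real) *\<^sub>R v) = of_real r * cdot u v"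
  unfolding cdot_def sc_comp by (simp add: sum_distrib_left mult_ac)

lemma partial_exp_le: "0 \<le> (s::real) \<Longrightarrow> (\<Sum>k<n. s^k / fact k) \<le> exp s"
proof -
  assume s: "0 \<le> s"
  have "(\<Sum>k<n. s^k /\<^sub>R fact k) \<le> (\<Sum>k. s^k /\<^sub>R fact k)"
    by (rule sum_le_suminf[OF summable_exp_generic]) (use s in \<open>auto intro!: scaleR_nonneg_nonneg\<close>)
  then show ?thesis by (simp add: exp_def divide_inverse mult.commute)
qed

lemma summable_b: "summable (\<lambda>i. (s::real)^(2*i) / (fact i)^2)"
proof (rule summable_comparison_test'[OF summable_exp[of "s^2"], of 0])
  fix n :: nat
  have f1: "(1::real) \<le> fact n" by simp
  have "norm (s^(2*n) / (fact n)^2) = (s^2)^n / (fact n)^2"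
    by (simp add: power_mult)
  also have "\<dots> \<le> (s^2)^n / fact n"
    by (rule divide_left_mono) (use f1 in \<open>auto simp: power2_eq_square\<close>)
  finally show "norm (s^(2*n) / (fact n)^2) \<le> inverse (fact n) * (s^2)^n"
    by (simp add: divide_inverse mult.commute)
qed

lemma sq_sum_le: "(\<forall>k\<in>A. 0 \<le> (e k::real)) \<Longrightarrow> finite A \<Longrightarrow> (\<Sum>k\<in>A. (e k)^2) \<le> (\<Sum>k\<in>A. e k)^2"
proof -
  assume nn: "\<forall>k\<in>A. 0 \<le> e k" and fin: "finite A"
  have "(\<Sum>k\<in>A. (e k)^2) \<le> (\<Sum>k\<in>A. e k * (\<Sum>j\<in>A. e j))"
  proof (rule sum_mono)
    fix k assume k: "k \<in> A"
    have "e k \<le> (\<Sum>j\<in>A. e j)" using member_le_sum[OF k] nn fin by blast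
    then show "(e k)^2 \<le> e k * (\<Sum>j\<in>A. e j)"
      using nn k by (simp add: power2_eq_square mult_left_mono)
  qed
  also have "\<dots> = (\<Sum>k\<in>A. e k)^2" by (simp add: power2_eq_square sum_distrib_right)
  finally show ?thesis .
qed

lemma tail_bound:
  assumes s: "0 \<le> (s::real)"
  shows "(\<Sum>k. s^(2*(k+M)) / (fact (k+M))^2) \<le> s^(2*M) / (fact M)^2 * exp (2 * s)"
proof -
  have sum2: "summable (\<lambda>k. (s^k / fact k)^2)"
    using summable_b[of s] by (simp add: power_divide power_mult[symmetric] mult.commute)
  have e2: "(\<Sum>k. (s^k / fact k)^2) \<le> exp (2 * s)"
  proof (rule suminf_le_const[OF sum2])
    fix n
    have "(\<Sum>k<n. (s^k / fact k)^2) \<le> (\<Sum>k<n. s^k / fact k)^2"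
      by (rule sq_sum_le) (use s in auto)
    also have "\<dots> \<le> (exp s)^2"
      by (rule power_mono[OF partial_exp_le[OF s]]) (use s in \<open>auto intro: sum_nonneg\<close>)
    also have "\<dots> = exp (2 * s)" by (simp add: power2_eq_square exp_add[symmetric])
    finally show "(\<Sum>k<n. (s^k / fact k)^2) \<le> exp (2 * s)" .
  qed
  have le: "s^(2*(k+M)) / (fact (k+M))^2 \<le> s^(2*M) / (fact M)^2 * (s^k / fact k)^2" for k
  proof -
    have "fact k * fact M dvd (fact (k+M) :: nat)" by (rule fact_fact_dvd_fact)
    then have "fact k * fact M \<le> (fact (k+M) :: nat)" by (rule dvd_imp_le) simp
    then have "real (fact k * fact M) \<le> real (fact (k+M))" by linarith
    then have f: "(fact k * fact M :: real) \<le> fact (k+M)" by (simp only: of_nat_fact of_nat_mult)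
    have fp: "(0::real) < fact k * fact M" by simp
    have "(fact k * fact M)^2 \<le> (fact (k+M) :: real)^2"
      by (rule power_mono[OF f]) (use fp in linarith)
    then have "s^(2*(k+M)) / (fact (k+M))^2 \<le> s^(2*(k+M)) / (fact k * fact M)^2"
      by (intro divide_left_mono) (use s fp in auto)
    also have "\<dots> = s^(2*M) / (fact M)^2 * (s^k / fact k)^2"
      by (simp add: power_add power_mult_distrib power_divide power_mult[symmetric] algebra_simps)
    finally show ?thesis .
  qed
  have "(\<Sum>k. s^(2*(k+M)) / (fact (k+M))^2) \<le> (\<Sum>k. s^(2*M) / (fact M)^2 * (s^k / fact k)^2)"
    by (rule suminf_le[OF le summable_ignore_initial_segment[OF summable_b] summable_mult[OF sum2]])
  also have "\<dots> = s^(2*M) / (fact M)^2 * (\<Sum>k. (s^k / fact k)^2)"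
    by (rule suminf_mult[OF sum2])
  also have "\<dots> \<le> s^(2*M) / (fact M)^2 * exp (2 * s)"
    by (rule mult_left_mono[OF e2]) (use s in simp)
  finally show ?thesis .
qed

lemma term_eq:
  fixes Y :: "complex^'p^'n" and S :: "complex^'p^'p" and c d :: "complex^'p"
  assumes "N < i"
  shows "cdot (struct_coeff Y S d z N i) (struct_coeff Y S c x N i)
       = of_real (1 / (fact i)^2) * cdot (Y *v (matpow S i *v d)) (Y *v (matpow S i *v c))"
  using assms by (simp add: struct_coeff_def cdot_scale power2_eq_square)

lemma adj_eq:
  fixes Y :: "complex^'p^'n" and P :: "complex^'p^'p" and c d :: "complex^'p"
  shows "cdot (Y *v (P *v d)) (Y *v (P *v c)) = cdot d ((adjm P ** adjm Y ** Y ** P) *v c)"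
  by (simp add: cdot_adj[symmetric] matrix_vector_mul_assoc[symmetric])

lemma term_bound:
  fixes Y :: "complex^'p^'n" and S :: "complex^'p^'p" and c d :: "complex^'p"
  shows "cmod (cdot (Y *v (matpow S i *v d)) (Y *v (matpow S i *v c)))
     \<le> norm d * mnorm2 (adjm Y ** Y) * norm c * mnorm2 S ^ (2*i)"
proof -
  have "cdot (Y *v (matpow S i *v d)) (Y *v (matpow S i *v c))
      = cdot (matpow S i *v d) ((adjm Y ** Y) *v (matpow S i *v c))"
    by (simp add: cdot_adj[symmetric] matrix_vector_mul_assoc[symmetric])
  also have "cmod \<dots> \<le> norm (matpow S i *v d) * norm ((adjm Y ** Y) *v (matpow S i *v c))"
    by (rule cdot_abs)
  also have "\<dots> \<le> (mnorm2 S ^ i * norm d) * (mnorm2 (adjm Y ** Y) * (mnorm2 S ^ i * norm c))"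
    by (intro mult_mono matpow_bound order_trans[OF mv_bound] mult_left_mono mnorm2_nonneg)
       (auto intro!: mult_nonneg_nonneg mnorm2_nonneg zero_le_power)
  also have "\<dots> = norm d * mnorm2 (adjm Y ** Y) * norm c * mnorm2 S ^ (2*i)"
    by (simp add: power_mult power2_eq_square power_mult_distrib mult_ac)
  finally show ?thesis .
qed

theorem mainTheorem3:
  fixes Y :: "complex^'p^'n" and S :: "complex^'p^'p"
    and c d :: "complex^'p" and x z :: "nat \<Rightarrow> complex^'n"
    and N Nmax :: nat
  assumes "Nmax \<ge> N + 1"
  shows "\<exists>\<epsilon>::complex.
     taylor_inner (struct_coeff Y S c x N) (struct_coeff Y S d z N)
       = (\<Sum>i\<le>N. cdot (z i) (x i)) + cdot d (Wmat Y S (N + 1) Nmax *v c) + \<epsilon>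
     \<and> cmod \<epsilon> \<le> norm d * mnorm2 (adjm Y ** Y) * norm c
          * (exp (2 * mnorm2 S) * mnorm2 S ^ (2 * (Nmax + 1)) / (fact (Nmax + 1))^2)"
proof -
  define a where "a i = cdot (struct_coeff Y S d z N i) (struct_coeff Y S c x N i)" for i
  define K where "K = norm d * mnorm2 (adjm Y ** Y) * norm c"
  define s where "s = mnorm2 S"
  define M where "M = Nmax + 1"
  have s0: "0 \<le> s" unfolding s_def by (rule mnorm2_nonneg)
  have K0: "0 \<le> K" unfolding K_def by (intro mult_nonneg_nonneg mnorm2_nonneg norm_ge_zero)
  have ab: "norm (a i) \<le> K * (s^(2*i) / (fact i)^2)" if "N < i" for i
  proof -
    have "norm (a i) = (1 / (fact i)^2) * cmod (cdot (Y *v (matpow S i *v d)) (Y *v (matpow S i *v c)))"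
      unfolding a_def term_eq[OF that] by (simp add: norm_mult norm_divide norm_power norm_fact)
    also have "\<dots> \<le> (1 / (fact i)^2) * (K * s^(2*i))"
      unfolding K_def s_def by (rule mult_left_mono[OF term_bound]) simp
    finally show ?thesis by simp
  qed
  have sumK: "summable (\<lambda>i. K * (s^(2*i) / (fact i)^2))"
    by (rule summable_mult[OF summable_b])
  have suma: "summable (\<lambda>i. norm (a i))"
    by (rule summable_comparison_test'[OF sumK, of "Suc N"]) (use ab in auto)
  have sa: "summable a" by (rule summable_norm_cancel[OF suma])
  define eps where "eps = (\<Sum>k. a (k + M))"
  have ti: "taylor_inner (struct_coeff Y S c x N) (struct_coeff Y S d z N) = suminf a"
    unfolding taylor_inner_def a_def ..
  have split1: "suminf a = eps + (\<Sum>i<M. a i)"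
    unfolding eps_def by (rule suminf_split_initial_segment[OF sa])
  have "(\<Sum>i<M. a i) = (\<Sum>i\<le>N + (Nmax - N). a i)"
    using assms unfolding M_def by (simp add: lessThan_Suc_atMost)
  also have "\<dots> = (\<Sum>i\<le>N. a i) + (\<Sum>i = Suc N..Nmax. a i)"
    using assms by (simp only: sum_up_index_split) simp
  finally have split2: "(\<Sum>i<M. a i) = (\<Sum>i\<le>N. a i) + (\<Sum>i = Suc N..Nmax. a i)" .
  have p1: "(\<Sum>i\<le>N. a i) = (\<Sum>i\<le>N. cdot (z i) (x i))"
    by (rule sum.cong) (auto simp: a_def struct_coeff_def)
  have "cdot d (Wmat Y S (N + 1) Nmax *v c)
      = (\<Sum>i = Suc N..Nmax. of_real (1 / (fact i)^2) *
           cdot d ((adjm (matpow S i) ** adjm Y ** Y ** matpow S i) *v c))"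
    unfolding Wmat_def by (simp add: mv_sum mv_scale cdot_sum2 cdot_scaleR2)
  also have "\<dots> = (\<Sum>i = Suc N..Nmax. a i)"
    by (rule sum.cong) (auto simp: a_def term_eq adj_eq)
  finally have p2: "cdot d (Wmat Y S (N + 1) Nmax *v c) = (\<Sum>i = Suc N..Nmax. a i)" .
  have eq: "taylor_inner (struct_coeff Y S c x N) (struct_coeff Y S d z N)
       = (\<Sum>i\<le>N. cdot (z i) (x i)) + cdot d (Wmat Y S (N + 1) Nmax *v c) + eps"
    using ti split1 split2 p1 p2 by simp
  have sumtail: "summable (\<lambda>k. norm (a (k + M)))"
    by (rule summable_ignore_initial_segment[OF suma])
  have "cmod eps \<le> (\<Sum>k. norm (a (k + M)))"
    unfolding eps_def by (rule summable_norm[OF sumtail])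
  also have "\<dots> \<le> (\<Sum>k. K * (s^(2*(k+M)) / (fact (k+M))^2))"
    by (rule suminf_le[OF _ sumtail summable_ignore_initial_segment[OF sumK]])
       (rule ab, use assms in \<open>simp add: M_def\<close>)
  also have "\<dots> = K * (\<Sum>k. s^(2*(k+M)) / (fact (k+M))^2)"
    by (rule suminf_mult[OF summable_ignore_initial_segment[OF summable_b]])
  also have "\<dots> \<le> K * (s^(2*M) / (fact M)^2 * exp (2 * s))"
    by (rule mult_left_mono[OF tail_bound[OF s0] K0])
  finally have bd: "cmod eps \<le> K * (exp (2 * s) * s^(2*M) / (fact M)^2)" by (simp add: mult_ac)
  show ?thesis
    using eq bd unfolding K_def s_def M_def by blast
qed

end
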